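(* Let $H$ be a separable Hilbert space, $(\Omega,\mathscr F,\mathbb P)$ a probability space, and $\Psi:\Omega\to B(H)$ a strongly measurable random operator such that $\Psi(\omega)$ is a positive contraction ($0\le\Psi(\omega)\le I$) for every $\omega$. Assume there is a constant $0<C<1$ with \[ \mathbb E\|\Psi x\|^{2}\ge C\|x\|^{2}\quad\text{for all }x\in H, \] equivalently $\int_\Omega\Psi^*\Psi\,d\mathbb P\ge CI$. Let $\Psi_1,\Psi_2,\dots$ be i.i.d. copies of $\Psi$, and for $k\ge1$ put $T_k=\Psi_k(I-\Psi_{k-1})\cdots(I-\Psi_1)$ (with $T_1=\Psi_1$). Then: (1) for every $x\in H$, $\displaystyle\lim_{n\to\infty}\mathbb E\Big\|x-\sum_{k=1}^{n}T_kx\Big\|^{2}=0$; (2) for every $x\in H$, $\displaystyle x=\lim_{n\to\infty}\sum_{k=1}^{n}T_kx$ almost surely; i.e. $I=\sum_{k=1}^\infty T_k$ almost surely (strongly); (3) for every $x\in H$, the limit below exists and \[ C\|x\|^{2}\le\lim_{n\to\infty}\mathbb E\Big[\sum_{k=1}^{n}\|T_kx\|^{2}\Big]\le\|x\|^{2}, \] so that $\{T_n\}_{n\in\mathbb N}$ forms a random operator-valued frame.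
   Context: A random operator $\Psi:\Omega\to B(H)$ is measurable in the strong operator sense: for each $x\in H$, $\omega\mapsto\Psi(\omega)x$ is measurable as an $H$-valued function. $\mathbb E\|\Psi x\|^2=\int_\Omega\|\Psi(\omega)x\|^2\,d\mathbb P(\omega)$, and $\int_\Omega\Psi^*\Psi\,d\mathbb P$ is the bounded positive operator $M$ with $\langle x,Mx\rangle=\mathbb E\|\Psi x\|^2$. A positive contraction is a selfadjoint $T$ with $0\le T\le I$. Inner product is linear in the second argument. *)

theory Defs
  imports "HOL-Probability.Probability"
begin

text \<open>Hilbert space H: a type of class real_inner and complete_space.
  Separability: existence of a countable dense subset.\<close>

definition separable_space :: "'a::topological_space itself \<Rightarrow> bool" where
  "separable_space _ \<longleftrightarrow> (\<exists>D::'a set. countable D \<and> closure D = UNIV)"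

definition positive_contraction :: "('a::real_inner \<Rightarrow>\<^sub>L 'a) \<Rightarrow> bool" where
  "positive_contraction T \<longleftrightarrow>
     (\<forall>x y. inner (T x) y = inner x (T y)) \<and>
     (\<forall>x. 0 \<le> inner x (T x) \<and> inner x (T x) \<le> inner x x)"

definition strongly_measurable_op :: "'w measure \<Rightarrow> ('w \<Rightarrow> ('a::real_normed_vector \<Rightarrow>\<^sub>L 'a)) \<Rightarrow> bool" where
  "strongly_measurable_op M \<Psi> \<longleftrightarrow> (\<forall>x. (\<lambda>\<omega>. \<Psi> \<omega> x) \<in> borel_measurable M)"

text \<open>The sigma-algebra on B(H) generated by the evaluation maps T \<mapsto> T x
  (strong operator measurability); used to speak of distributions / independence.\<close>
definition SOT_space :: "('a::real_normed_vector \<Rightarrow>\<^sub>L 'a) measure" where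
  "SOT_space = sigma UNIV (\<Union>x. {(\<lambda>T. blinfun_apply T x) -` B | B. B \<in> sets borel})"

text \<open>Products (I - \<Psi>_k)...(I - \<Psi>_1), with \<Psi>s indexed from 1.\<close>
fun prod_compl :: "(nat \<Rightarrow> 'w \<Rightarrow> ('a::real_normed_vector \<Rightarrow>\<^sub>L 'a)) \<Rightarrow> nat \<Rightarrow> 'w \<Rightarrow> ('a \<Rightarrow>\<^sub>L 'a)" where
  "prod_compl \<Psi>s 0 \<omega> = id_blinfun"
| "prod_compl \<Psi>s (Suc k) \<omega> = (id_blinfun - \<Psi>s (Suc k) \<omega>) o\<^sub>L prod_compl \<Psi>s k \<omega>"

definition Top :: "(nat \<Rightarrow> 'w \<Rightarrow> ('a::real_normed_vector \<Rightarrow>\<^sub>L 'a)) \<Rightarrow> nat \<Rightarrow> 'w \<Rightarrow> ('a \<Rightarrow>\<^sub>L 'a)" where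
  "Top \<Psi>s k \<omega> = \<Psi>s k \<omega> o\<^sub>L prod_compl \<Psi>s (k - 1) \<omega>"

end

theory Submission
  imports Defs
begin


lemma sep_dense:
  assumes sep: "separable_space TYPE('a::metric_space)"
  obtains d :: "nat \<Rightarrow> 'a::metric_space" where "\<And>y e. e > 0 \<Longrightarrow> \<exists>m. dist y (d m) < e"
proof -
  obtain D :: "'a set" where D: "countable D" "closure D = UNIV"
    using sep unfolding separable_space_def by blast
  define d where "d = from_nat_into D"
  have "\<exists>m. dist y (d m) < e" if e: "e > 0" for y e
  proof -
    have "y \<in> closure D" using D by auto
    then obtain z where z: "z \<in> D" "dist z y < e" using e closure_approachable by blast
    then obtain m where "d m = z" using from_nat_into_surj[OF D(1)] d_def by metis
    then show ?thesis using z by (metis dist_commute)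
  qed
  then show ?thesis using that by blast
qed

lemma cont_meas:
  assumes "continuous_on UNIV g" "f \<in> borel_measurable M"
  shows "(\<lambda>x. g (f x)) \<in> borel_measurable M"
  using measurable_compose[OF assms(2) borel_measurable_continuous_onI[OF assms(1)]] by simp

lemma app_meas:
  fixes A :: "'w \<Rightarrow> ('a::real_normed_vector \<Rightarrow>\<^sub>L 'b::real_normed_vector)"
  assumes sep: "separable_space TYPE('a)"
    and A: "\<And>y. (\<lambda>\<omega>. A \<omega> y) \<in> borel_measurable M"
    and f: "f \<in> borel_measurable M"
  shows "(\<lambda>\<omega>. A \<omega> (f \<omega>)) \<in> borel_measurable M"
proof -
  obtain d :: "nat \<Rightarrow> 'a" where d: "\<And>y e. e > 0 \<Longrightarrow> \<exists>m. dist y (d m) < e"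
    using sep_dense[OF sep] by blast
  define m where "m j \<omega> = (LEAST i. dist (f \<omega>) (d i) < 1 / Suc j)" for j \<omega>
  have m_meas: "m j \<in> measurable M (count_space UNIV)" for j
  proof -
    have [measurable]: "(\<lambda>\<omega>. dist (f \<omega>) (d i)) \<in> borel_measurable M" for i
      using f by (intro cont_meas[where g="\<lambda>z. dist z (d i)"] continuous_intros) auto
    show ?thesis unfolding m_def by (intro measurable_Least) measurable
  qed
  have 1: "(\<lambda>\<omega>. A \<omega> (d (m j \<omega>))) \<in> borel_measurable M" for j
    by (rule measurable_compose_countable[OF _ m_meas]) (rule A)
  have dm: "dist (f \<omega>) (d (m j \<omega>)) < 1 / Suc j" for j \<omega>
  proof -
    have "\<exists>i. dist (f \<omega>) (d i) < 1 / Suc j" by (rule d) simp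
    then show ?thesis unfolding m_def by (rule LeastI_ex)
  qed
  have conv: "(\<lambda>j. d (m j \<omega>)) \<longlonglongrightarrow> f \<omega>" for \<omega>
  proof -
    have "(\<lambda>j. 1 / real (Suc j)) \<longlonglongrightarrow> 0" by (rule LIMSEQ_inverse_real_of_nat[unfolded inverse_eq_divide])
    then have "(\<lambda>j. dist (d (m j \<omega>)) (f \<omega>)) \<longlonglongrightarrow> 0"
    proof (rule Lim_null_comparison[rotated])
      show "\<forall>\<^sub>F j in sequentially. norm (dist (d (m j \<omega>)) (f \<omega>)) \<le> 1 / real (Suc j)"
        by (rule always_eventually) (metis dm dist_commute less_imp_le real_norm_def abs_of_nonneg zero_le_dist)
    qed
    then show ?thesis by (rule tendsto_dist_iff[THEN iffD2])
  qed
  have lim: "(\<lambda>j. A \<omega> (d (m j \<omega>))) \<longlonglongrightarrow> A \<omega> (f \<omega>)" for \<omega>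
    by (rule blinfun.tendsto[OF tendsto_const conv])
  show ?thesis by (rule borel_measurable_LIMSEQ_metric[OF 1 lim])
qed



lemma SOT_space_space: "space SOT_space = UNIV"
  unfolding SOT_space_def by (simp add: space_measure_of_conv)

lemma SOT_apply_meas: "(\<lambda>T. blinfun_apply T y) \<in> borel_measurable SOT_space"
proof (rule measurableI)
  fix B :: "'a set" assume "B \<in> sets borel"
  then have "(\<lambda>T. blinfun_apply T y) -` B \<in> (\<Union>x. {(\<lambda>T. blinfun_apply T x) -` B | B. B \<in> sets borel})"
    by blast
  then show "(\<lambda>T. blinfun_apply T y) -` B \<inter> space SOT_space \<in> sets SOT_space"
    unfolding SOT_space_def by (simp add: space_measure_of_conv sets_measure_of)
qed auto

lemma SOT_meas:
  fixes \<Psi> :: "'w \<Rightarrow> ('a::real_normed_vector \<Rightarrow>\<^sub>L 'a)"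
  assumes "strongly_measurable_op M \<Psi>"
  shows "\<Psi> \<in> measurable M SOT_space"
  unfolding SOT_space_def
proof (rule measurable_measure_of)
  fix S :: "('a \<Rightarrow>\<^sub>L 'a) set"
  assume "S \<in> (\<Union>x. {(\<lambda>T. blinfun_apply T x) -` B | B. B \<in> sets borel})"
  then obtain x B where S: "S = (\<lambda>T. blinfun_apply T x) -` B" and B: "B \<in> sets borel" by blast
  have "(\<lambda>\<omega>. \<Psi> \<omega> x) \<in> borel_measurable M" using assms unfolding strongly_measurable_op_def by blast
  then have "(\<lambda>\<omega>. \<Psi> \<omega> x) -` B \<inter> space M \<in> sets M" using B by (rule measurable_sets)
  then show "\<Psi> -` S \<inter> space M \<in> sets M" by (simp add: S vimage_def)
qed auto



lemma prod_compl_meas: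
  fixes \<Phi> :: "nat \<Rightarrow> 'w \<Rightarrow> ('a::real_normed_vector \<Rightarrow>\<^sub>L 'a)"
  assumes sep: "separable_space TYPE('a)"
   and \<Phi>: "\<And>k y. 1 \<le> k \<Longrightarrow> k \<le> n \<Longrightarrow> (\<lambda>\<omega>. \<Phi> k \<omega> y) \<in> borel_measurable M"
  shows "(\<lambda>\<omega>. prod_compl \<Phi> n \<omega> x) \<in> borel_measurable M"
  using \<Phi>
proof (induction n)
  case 0 then show ?case by simp
next
  case (Suc n)
  have IH: "(\<lambda>\<omega>. prod_compl \<Phi> n \<omega> x) \<in> borel_measurable M" using Suc by simp
  have "(\<lambda>\<omega>. (id_blinfun - \<Phi> (Suc n) \<omega>) (prod_compl \<Phi> n \<omega> x)) \<in> borel_measurable M"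
  proof (rule app_meas[OF sep _ IH])
    fix y
    have "(\<lambda>\<omega>. \<Phi> (Suc n) \<omega> y) \<in> borel_measurable M" using Suc.prems by simp
    then have "(\<lambda>\<omega>. y - \<Phi> (Suc n) \<omega> y) \<in> borel_measurable M"
      by (intro cont_meas[where g="\<lambda>z. y - z"] continuous_intros)
    then show "(\<lambda>\<omega>. (id_blinfun - \<Phi> (Suc n) \<omega>) y) \<in> borel_measurable M"
      by (simp add: blinfun.diff_left)
  qed
  then show ?case by simp
qed

lemma prod_compl_cong:
  assumes "\<And>k. 1 \<le> k \<Longrightarrow> k \<le> n \<Longrightarrow> \<Phi> k \<omega> = \<Phi>' k \<omega>'"
  shows "prod_compl \<Phi> n \<omega> = prod_compl \<Phi>' n \<omega>'"
  using assms by (induction n) auto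

lemma pc_ineq:
  fixes T :: "'a::real_inner \<Rightarrow>\<^sub>L 'a"
  assumes "positive_contraction T"
  shows "(norm (y - T y))\<^sup>2 + (norm (T y))\<^sup>2 \<le> (norm y)\<^sup>2"
proof -
  have sa: "\<And>u v. inner (T u) v = inner u (T v)" and p0: "\<And>u. 0 \<le> inner u (T u)"
    and p1: "\<And>u. inner u (T u) \<le> inner u u"
    using assms unfolding positive_contraction_def by auto
  have a: "0 \<le> inner (y - T y) (T (y - T y))" by (rule p0)
  have b: "inner (T y) (T (T y)) \<le> inner (T y) (T y)" by (rule p1)
  have c: "inner y (T (T y)) = inner (T y) (T y)" using sa[of y "T y"] by simp
  have d: "inner (T y) y = inner y (T y)" by (rule inner_commute)
  from a have "0 \<le> inner y (T y) - inner y (T (T y)) - inner (T y) (T y) + inner (T y) (T (T y))"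
    by (simp add: blinfun.diff_right inner_diff_left inner_diff_right d)
  hence "inner (T y) (T y) \<le> inner y (T y)" using b c by linarith
  moreover have "(norm (y - T y))\<^sup>2 = inner y y - 2 * inner y (T y) + inner (T y) (T y)"
    by (simp add: power2_norm_eq_inner inner_diff_left inner_diff_right d)
  moreover have "(norm (T y))\<^sup>2 = inner (T y) (T y)" "(norm y)\<^sup>2 = inner y y"
    by (simp_all add: power2_norm_eq_inner)
  ultimately show ?thesis by linarith
qed

lemma KL:
  fixes Z W :: "'v \<Rightarrow> 'b" and h :: "'b \<Rightarrow> ('a::real_normed_vector \<Rightarrow>\<^sub>L 'a)" and G :: "'b \<Rightarrow> 'a"
    and \<Psi> :: "'w \<Rightarrow> ('a \<Rightarrow>\<^sub>L 'a)"
  assumes N: "prob_space N" and M: "prob_space M"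
    and ind: "prob_space.indep_var N S Z T W"
    and hm: "h \<in> measurable S SOT_space" and Gm: "G \<in> borel_measurable T"
    and PsiM: "\<Psi> \<in> measurable M SOT_space"
    and dist: "distr N SOT_space (\<lambda>\<omega>. h (Z \<omega>)) = distr M SOT_space \<Psi>"
    and g: "(\<lambda>p. g (fst p) (snd p)) \<in> borel_measurable (SOT_space \<Otimes>\<^sub>M borel)"
  shows "(\<integral>\<^sup>+\<omega>. g (h (Z \<omega>)) (G (W \<omega>)) \<partial>N)
     = (\<integral>\<^sup>+w. (\<integral>\<^sup>+\<omega>. g (\<Psi> \<omega>) (G w) \<partial>M) \<partial>(distr N T W))"
proof -
  interpret N: prob_space N by fact
  interpret M: prob_space M by fact
  from ind have Zm: "Z \<in> measurable N S" and Wm: "W \<in> measurable N T" and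
    eq: "distr N S Z \<Otimes>\<^sub>M distr N T W = distr N (S \<Otimes>\<^sub>M T) (\<lambda>x. (Z x, W x))"
    unfolding N.indep_var_distribution_eq by auto
  interpret PZ: prob_space "distr N S Z" by (rule N.prob_space_distr[OF Zm])
  interpret PY: prob_space "distr N T W" by (rule N.prob_space_distr[OF Wm])
  interpret P: pair_sigma_finite "distr N S Z" "distr N T W"
    by (simp add: PY.sigma_finite_measure_axioms PZ.sigma_finite_measure_axioms pair_sigma_finite.intro)
  have g2: "(\<lambda>p. g (h (fst p)) (G (snd p))) \<in> borel_measurable (S \<Otimes>\<^sub>M T)"
  proof -
    have "(\<lambda>p. (h (fst p), G (snd p))) \<in> measurable (S \<Otimes>\<^sub>M T) (SOT_space \<Otimes>\<^sub>M borel)"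
      by (intro measurable_Pair measurable_compose[OF measurable_fst hm] measurable_compose[OF measurable_snd Gm])
    from measurable_compose[OF this g] show ?thesis by simp
  qed
  have gm: "(\<lambda>p. g (h (fst p)) (G (snd p))) \<in> borel_measurable (distr N S Z \<Otimes>\<^sub>M distr N T W)"
    using g2 by (subst measurable_cong_sets[OF sets_pair_measure_cong[OF sets_distr sets_distr] refl])
  have gT: "(\<lambda>T. g T y) \<in> borel_measurable SOT_space" for y
    using measurable_compose[OF measurable_Pair[OF measurable_ident_sets[OF refl] measurable_const] g, of y]
    by simp
  have "(\<integral>\<^sup>+\<omega>. g (h (Z \<omega>)) (G (W \<omega>)) \<partial>N)
      = (\<integral>\<^sup>+p. g (h (fst p)) (G (snd p)) \<partial>distr N (S \<Otimes>\<^sub>M T) (\<lambda>x. (Z x, W x)))"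
    by (subst nn_integral_distr) (auto intro: measurable_Pair Zm Wm g2)
  also have "\<dots> = (\<integral>\<^sup>+p. g (h (fst p)) (G (snd p)) \<partial>(distr N S Z \<Otimes>\<^sub>M distr N T W))"
    by (simp add: eq)
  also have "\<dots> = (\<integral>\<^sup>+w. \<integral>\<^sup>+z. g (h z) (G w) \<partial>distr N S Z \<partial>distr N T W)"
    using P.nn_integral_snd[OF gm] by simp
  also have "\<dots> = (\<integral>\<^sup>+w. (\<integral>\<^sup>+\<omega>. g (\<Psi> \<omega>) (G w) \<partial>M) \<partial>(distr N T W))"
  proof (rule nn_integral_cong)
    fix w
    have "(\<integral>\<^sup>+z. g (h z) (G w) \<partial>distr N S Z) = (\<integral>\<^sup>+\<omega>. g (h (Z \<omega>)) (G w) \<partial>N)"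
      by (rule nn_integral_distr[OF Zm]) (simp add: measurable_compose[OF hm gT])
    also have "\<dots> = (\<integral>\<^sup>+T. g T (G w) \<partial>distr N SOT_space (\<lambda>\<omega>. h (Z \<omega>)))"
      by (rule nn_integral_distr[symmetric]) (auto intro: measurable_compose[OF Zm hm] gT)
    also have "\<dots> = (\<integral>\<^sup>+\<omega>. g (\<Psi> \<omega>) (G w) \<partial>M)"
      unfolding dist by (rule nn_integral_distr[OF PsiM]) (auto intro: gT)
    finally show "(\<integral>\<^sup>+z. g (h z) (G w) \<partial>distr N S Z) = (\<integral>\<^sup>+\<omega>. g (\<Psi> \<omega>) (G w) \<partial>M)" .
  qed
  finally show ?thesis .
qed



lemma nsq_meas:
  fixes f :: "'w \<Rightarrow> 'a::real_normed_vector"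
  assumes "f \<in> borel_measurable M"
  shows "(\<lambda>x. ennreal ((norm (f x))\<^sup>2)) \<in> borel_measurable M"
proof -
  have "(\<lambda>x. (norm (f x))\<^sup>2) \<in> borel_measurable M"
    by (rule cont_meas[OF _ assms]) (intro continuous_intros)
  from measurable_compose[OF this measurable_ennreal] show ?thesis .
qed

lemma nsq_meas_real:
  fixes f :: "'w \<Rightarrow> 'a::real_normed_vector"
  assumes "f \<in> borel_measurable M"
  shows "(\<lambda>x. (norm (f x))\<^sup>2) \<in> borel_measurable M"
  by (rule cont_meas[OF _ assms]) (intro continuous_intros)

lemma pair_app_meas:
  assumes sep: "separable_space TYPE('a::real_normed_vector)"
  shows "(\<lambda>p. blinfun_apply (fst p) (snd p)) \<in> borel_measurable (SOT_space \<Otimes>\<^sub>M (borel :: 'a measure))"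
    and "(\<lambda>p. blinfun_apply (id_blinfun - fst p) (snd p)) \<in> borel_measurable (SOT_space \<Otimes>\<^sub>M (borel :: 'a measure))"
proof -
  show "(\<lambda>p. blinfun_apply (fst p) (snd p)) \<in> borel_measurable (SOT_space \<Otimes>\<^sub>M (borel :: 'a measure))"
    by (rule app_meas[OF sep _ measurable_snd]) (rule measurable_compose[OF measurable_fst SOT_apply_meas])
  show "(\<lambda>p. blinfun_apply (id_blinfun - fst p) (snd p)) \<in> borel_measurable (SOT_space \<Otimes>\<^sub>M (borel :: 'a measure))"
  proof (rule app_meas[OF sep _ measurable_snd])
    fix y :: 'a
    have "(\<lambda>p. blinfun_apply (fst p) y) \<in> borel_measurable (SOT_space \<Otimes>\<^sub>M (borel :: 'a measure))"
      by (rule measurable_compose[OF measurable_fst SOT_apply_meas])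
    then have "(\<lambda>p. y - blinfun_apply (fst p) y) \<in> borel_measurable (SOT_space \<Otimes>\<^sub>M (borel :: 'a measure))"
      by (intro cont_meas[where g="\<lambda>z. y - z"] continuous_intros)
    then show "(\<lambda>p. blinfun_apply (id_blinfun - fst p) y) \<in> borel_measurable (SOT_space \<Otimes>\<^sub>M (borel :: 'a measure))"
      by (simp add: blinfun.diff_left)
  qed
qed

lemma sum_shift1: "(\<Sum>k\<in>{1..n}. f k) = (\<Sum>j<n. f (Suc j) :: 'b::comm_monoid_add)"
  by (induction n) (simp_all add: atLeastAtMostSuc_conv add.commute)



theorem mainTheorem2:
  fixes M :: "'w measure" and N :: "'v measure"
    and \<Psi> :: "'w \<Rightarrow> ('a::{real_inner, complete_space} \<Rightarrow>\<^sub>L 'a)"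
    and \<Psi>s :: "nat \<Rightarrow> 'v \<Rightarrow> ('a \<Rightarrow>\<^sub>L 'a)"
    and C :: real
  assumes sep: "separable_space TYPE('a)"
    and probM: "prob_space M"
    and meas: "strongly_measurable_op M \<Psi>"
    and pos: "\<And>\<omega>. \<omega> \<in> space M \<Longrightarrow> positive_contraction (\<Psi> \<omega>)"
    and C_pos: "0 < C" and C_lt1: "C < 1"
    and frame_lower: "\<And>x. (\<integral>\<omega>. (norm (\<Psi> \<omega> x))\<^sup>2 \<partial>M) \<ge> C * (norm x)\<^sup>2"
    and probN: "prob_space N"
    and meas_copies: "\<And>k. k \<ge> 1 \<Longrightarrow> strongly_measurable_op N (\<Psi>s k)"
    and indep: "prob_space.indep_vars N (\<lambda>_. SOT_space) \<Psi>s {1..}"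
    and ident: "\<And>k. k \<ge> 1 \<Longrightarrow> distr N SOT_space (\<Psi>s k) = distr M SOT_space \<Psi>"
  shows "(\<forall>x. (\<lambda>n. \<integral>\<omega>. (norm (x - (\<Sum>k\<in>{1..n}. Top \<Psi>s k \<omega> x)))\<^sup>2 \<partial>N)
              \<longlonglongrightarrow> 0)
       \<and> (\<forall>x. AE \<omega> in N. (\<lambda>n. \<Sum>k\<in>{1..n}. Top \<Psi>s k \<omega> x) \<longlonglongrightarrow> x)
       \<and> (\<forall>x. convergent (\<lambda>n. \<integral>\<omega>. (\<Sum>k\<in>{1..n}. (norm (Top \<Psi>s k \<omega> x))\<^sup>2) \<partial>N)
              \<and> C * (norm x)\<^sup>2 \<le> lim (\<lambda>n. \<integral>\<omega>. (\<Sum>k\<in>{1..n}. (norm (Top \<Psi>s k \<omega> x))\<^sup>2) \<partial>N)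
              \<and> lim (\<lambda>n. \<integral>\<omega>. (\<Sum>k\<in>{1..n}. (norm (Top \<Psi>s k \<omega> x))\<^sup>2) \<partial>N) \<le> (norm x)\<^sup>2)"
proof -
  interpret N: prob_space N by (rule probN)
  interpret M: prob_space M by (rule probM)
  have PsiM: "\<Psi> \<in> measurable M SOT_space" by (rule SOT_meas[OF meas])
  have Psi_app: "\<And>y. (\<lambda>\<omega>. \<Psi> \<omega> y) \<in> borel_measurable M"
    using meas unfolding strongly_measurable_op_def by blast
  have Psis_app: "\<And>k y. 1 \<le> k \<Longrightarrow> (\<lambda>\<omega>. \<Psi>s k \<omega> y) \<in> borel_measurable N"
    using meas_copies unfolding strongly_measurable_op_def by blast
  define P where "P x n \<omega> = prod_compl \<Psi>s n \<omega> x" for x n \<omega>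
  have Pm: "(\<lambda>\<omega>. P x n \<omega>) \<in> borel_measurable N" for x n
    unfolding P_def by (rule prod_compl_meas[OF sep]) (rule Psis_app)
  have TPm: "(\<lambda>\<omega>. \<Psi>s (Suc n) \<omega> (P x n \<omega>)) \<in> borel_measurable N" for x n
    by (rule app_meas[OF sep _ Pm]) (rule Psis_app, simp)
  have P_Suc: "P x (Suc n) \<omega> = P x n \<omega> - \<Psi>s (Suc n) \<omega> (P x n \<omega>)" for x n \<omega>
    by (simp add: P_def blinfun.diff_left)
  have P0: "P x 0 \<omega> = x" for x \<omega> by (simp add: P_def)
  have Top_eq: "Top \<Psi>s (Suc n) \<omega> x = \<Psi>s (Suc n) \<omega> (P x n \<omega>)" for x n \<omega>
    by (simp add: Top_def P_def)
  have tele: "x - (\<Sum>k\<in>{1..n}. Top \<Psi>s k \<omega> x) = P x n \<omega>" for x n \<omega>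
  proof (induction n)
    case 0 then show ?case by (simp add: P0)
  next
    case (Suc n)
    have "x - (\<Sum>k\<in>{1..Suc n}. Top \<Psi>s k \<omega> x) = (x - (\<Sum>k\<in>{1..n}. Top \<Psi>s k \<omega> x)) - Top \<Psi>s (Suc n) \<omega> x"
      by (simp add: atLeastAtMostSuc_conv algebra_simps)
    then show ?case using Suc by (simp add: Top_eq P_Suc)
  qed
  have a_ineq: "(\<integral>\<^sup>+\<omega>. ennreal ((norm (P x (Suc n) \<omega>))\<^sup>2) \<partial>N)
      + (\<integral>\<^sup>+\<omega>. ennreal ((norm (\<Psi>s (Suc n) \<omega> (P x n \<omega>)))\<^sup>2) \<partial>N)
      \<le> (\<integral>\<^sup>+\<omega>. ennreal ((norm (P x n \<omega>))\<^sup>2) \<partial>N)"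
   and b_ineq: "ennreal C * (\<integral>\<^sup>+\<omega>. ennreal ((norm (P x n \<omega>))\<^sup>2) \<partial>N)
      \<le> (\<integral>\<^sup>+\<omega>. ennreal ((norm (\<Psi>s (Suc n) \<omega> (P x n \<omega>)))\<^sup>2) \<partial>N)" for x n
  proof -
    let ?S = "PiM {Suc n} (\<lambda>_. SOT_space)" and ?T = "PiM {1..n} (\<lambda>_. SOT_space)"
    let ?Z = "\<lambda>\<omega>. restrict (\<lambda>i. \<Psi>s i \<omega>) {Suc n}" and ?W = "\<lambda>\<omega>. restrict (\<lambda>i. \<Psi>s i \<omega>) {1..n}"
    define h where "h z = (z (Suc n) :: 'a \<Rightarrow>\<^sub>L 'a)" for z :: "nat \<Rightarrow> ('a \<Rightarrow>\<^sub>L 'a)"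
    define G where "G w = prod_compl (\<lambda>k w. w k) n w x" for w :: "nat \<Rightarrow> ('a \<Rightarrow>\<^sub>L 'a)"
    have ind: "N.indep_var ?S ?Z ?T ?W" by (rule N.indep_var_restrict[OF indep]) auto
    have Wm: "?W \<in> measurable N ?T" using ind unfolding N.indep_var_distribution_eq by auto
    have hm: "h \<in> measurable ?S SOT_space" unfolding h_def by (rule measurable_component_singleton) simp
    have Gm: "G \<in> borel_measurable ?T" unfolding G_def
    proof (rule prod_compl_meas[OF sep])
      fix k y assume "1 \<le> k" "k \<le> n"
      then show "(\<lambda>w. blinfun_apply (w k) y) \<in> borel_measurable ?T"
        using measurable_compose[OF measurable_component_singleton[of k "{1..n}" "\<lambda>_. SOT_space"] SOT_apply_meas]
        by simp
    qed
    have hZ: "h (?Z \<omega>) = \<Psi>s (Suc n) \<omega>" for \<omega> by (simp add: h_def)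
    have GW: "G (?W \<omega>) = P x n \<omega>" for \<omega>
      unfolding G_def P_def by (subst prod_compl_cong[where \<Phi>'=\<Psi>s and \<omega>'=\<omega>]) auto
    have dist: "distr N SOT_space (\<lambda>\<omega>. h (?Z \<omega>)) = distr M SOT_space \<Psi>"
      using ident[of "Suc n"] by (simp add: hZ)
    have KLi: "(\<integral>\<^sup>+\<omega>. g (\<Psi>s (Suc n) \<omega>) (P x n \<omega>) \<partial>N) = (\<integral>\<^sup>+w. (\<integral>\<^sup>+\<omega>. g (\<Psi> \<omega>) (G w) \<partial>M) \<partial>(distr N ?T ?W))"
      if gm: "(\<lambda>p. g (fst p) (snd p)) \<in> borel_measurable (SOT_space \<Otimes>\<^sub>M borel)" for g
    proof -
      note K1 = KL[OF probN probM ind]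
      note K2 = K1[OF hm]
      note K3 = K2[OF Gm]
      note K4 = K3[OF PsiM]
      note K5 = K4[OF dist gm]
      show ?thesis using K5 unfolding hZ GW .
    qed
    have bk: "(\<integral>\<^sup>+w. ennreal ((norm (G w))\<^sup>2) \<partial>(distr N ?T ?W)) = (\<integral>\<^sup>+\<omega>. ennreal ((norm (P x n \<omega>))\<^sup>2) \<partial>N)"
    proof -
      have "(\<integral>\<^sup>+w. ennreal ((norm (G w))\<^sup>2) \<partial>(distr N ?T ?W)) = (\<integral>\<^sup>+\<omega>. ennreal ((norm (G (?W \<omega>)))\<^sup>2) \<partial>N)"
        by (rule nn_integral_distr[OF Wm]) (unfold measurable_distr_eq1, rule nsq_meas[OF Gm])
      then show ?thesis unfolding GW .
    qed
    define g1 where "g1 T y = ennreal ((norm ((id_blinfun - T) y))\<^sup>2) + ennreal ((norm (T y))\<^sup>2)"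
      for T :: "'a \<Rightarrow>\<^sub>L 'a" and y
    have g1m: "(\<lambda>p. g1 (fst p) (snd p)) \<in> borel_measurable (SOT_space \<Otimes>\<^sub>M borel)"
      unfolding g1_def by (intro borel_measurable_add nsq_meas pair_app_meas[OF sep])
    have "(\<integral>\<^sup>+\<omega>. ennreal ((norm (P x (Suc n) \<omega>))\<^sup>2) \<partial>N)
      + (\<integral>\<^sup>+\<omega>. ennreal ((norm (\<Psi>s (Suc n) \<omega> (P x n \<omega>)))\<^sup>2) \<partial>N)
      = (\<integral>\<^sup>+\<omega>. g1 (\<Psi>s (Suc n) \<omega>) (P x n \<omega>) \<partial>N)"
      unfolding g1_def
      by (subst nn_integral_add[symmetric, OF nsq_meas[OF Pm] nsq_meas[OF TPm]]) (simp add: P_Suc blinfun.diff_left)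
    also have "\<dots> = (\<integral>\<^sup>+w. (\<integral>\<^sup>+\<omega>. g1 (\<Psi> \<omega>) (G w) \<partial>M) \<partial>(distr N ?T ?W))" by (rule KLi[OF g1m])
    also have "\<dots> \<le> (\<integral>\<^sup>+w. ennreal ((norm (G w))\<^sup>2) \<partial>(distr N ?T ?W))"
    proof (rule nn_integral_mono)
      fix w
      have "(\<integral>\<^sup>+\<omega>. g1 (\<Psi> \<omega>) (G w) \<partial>M) \<le> (\<integral>\<^sup>+\<omega>. ennreal ((norm (G w))\<^sup>2) \<partial>M)"
      proof (rule nn_integral_mono)
        fix \<omega> assume "\<omega> \<in> space M"
        then have "(norm (G w - \<Psi> \<omega> (G w)))\<^sup>2 + (norm (\<Psi> \<omega> (G w)))\<^sup>2 \<le> (norm (G w))\<^sup>2"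
          by (intro pc_ineq pos)
        then show "g1 (\<Psi> \<omega>) (G w) \<le> ennreal ((norm (G w))\<^sup>2)"
          unfolding g1_def by (simp add: blinfun.diff_left ennreal_plus[symmetric] del: ennreal_plus)
      qed
      also have "\<dots> = ennreal ((norm (G w))\<^sup>2)" by (simp add: M.emeasure_space_1)
      finally show "(\<integral>\<^sup>+\<omega>. g1 (\<Psi> \<omega>) (G w) \<partial>M) \<le> ennreal ((norm (G w))\<^sup>2)" .
    qed
    also have "\<dots> = (\<integral>\<^sup>+\<omega>. ennreal ((norm (P x n \<omega>))\<^sup>2) \<partial>N)" by (rule bk)
    finally show "(\<integral>\<^sup>+\<omega>. ennreal ((norm (P x (Suc n) \<omega>))\<^sup>2) \<partial>N)
      + (\<integral>\<^sup>+\<omega>. ennreal ((norm (\<Psi>s (Suc n) \<omega> (P x n \<omega>)))\<^sup>2) \<partial>N)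
      \<le> (\<integral>\<^sup>+\<omega>. ennreal ((norm (P x n \<omega>))\<^sup>2) \<partial>N)" .

    define g2 where "g2 T y = ennreal ((norm (blinfun_apply T y))\<^sup>2)" for T :: "'a \<Rightarrow>\<^sub>L 'a" and y
    have g2m: "(\<lambda>p. g2 (fst p) (snd p)) \<in> borel_measurable (SOT_space \<Otimes>\<^sub>M borel)"
      unfolding g2_def by (intro nsq_meas pair_app_meas(1)[OF sep])
    have "ennreal C * (\<integral>\<^sup>+\<omega>. ennreal ((norm (P x n \<omega>))\<^sup>2) \<partial>N)
        = ennreal C * (\<integral>\<^sup>+w. ennreal ((norm (G w))\<^sup>2) \<partial>(distr N ?T ?W))"
      unfolding bk ..
    also have "\<dots> = (\<integral>\<^sup>+w. ennreal C * ennreal ((norm (G w))\<^sup>2) \<partial>(distr N ?T ?W))"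
      by (rule nn_integral_cmult[symmetric]) (unfold measurable_distr_eq1, rule nsq_meas[OF Gm])
    also have "\<dots> \<le> (\<integral>\<^sup>+w. (\<integral>\<^sup>+\<omega>. g2 (\<Psi> \<omega>) (G w) \<partial>M) \<partial>(distr N ?T ?W))"
    proof (rule nn_integral_mono)
      fix w
      have int: "integrable M (\<lambda>\<omega>. (norm (\<Psi> \<omega> (G w)))\<^sup>2)"
      proof (rule M.integrable_const_bound[where B="(norm (G w))\<^sup>2"])
        show "AE \<omega> in M. norm ((norm (\<Psi> \<omega> (G w)))\<^sup>2) \<le> (norm (G w))\<^sup>2"
        proof (rule AE_I2)
          fix \<omega> assume "\<omega> \<in> space M"
          then have "(norm (G w - \<Psi> \<omega> (G w)))\<^sup>2 + (norm (\<Psi> \<omega> (G w)))\<^sup>2 \<le> (norm (G w))\<^sup>2"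
            by (intro pc_ineq pos)
          moreover have "0 \<le> (norm (G w - \<Psi> \<omega> (G w)))\<^sup>2" by simp
          ultimately have "(norm (\<Psi> \<omega> (G w)))\<^sup>2 \<le> (norm (G w))\<^sup>2" by linarith
          then show "norm ((norm (\<Psi> \<omega> (G w)))\<^sup>2) \<le> (norm (G w))\<^sup>2" by (simp only: real_norm_def abs_of_nonneg[OF zero_le_power2])
        qed
        show "(\<lambda>\<omega>. (norm (\<Psi> \<omega> (G w)))\<^sup>2) \<in> borel_measurable M" by (rule nsq_meas_real[OF Psi_app])
      qed
      have "(\<integral>\<^sup>+\<omega>. g2 (\<Psi> \<omega>) (G w) \<partial>M) = ennreal (\<integral>\<omega>. (norm (\<Psi> \<omega> (G w)))\<^sup>2 \<partial>M)"
        unfolding g2_def by (rule nn_integral_eq_integral[OF int]) simp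
      moreover have "C * (norm (G w))\<^sup>2 \<le> (\<integral>\<omega>. (norm (\<Psi> \<omega> (G w)))\<^sup>2 \<partial>M)" by (rule frame_lower)
      ultimately show "ennreal C * ennreal ((norm (G w))\<^sup>2) \<le> (\<integral>\<^sup>+\<omega>. g2 (\<Psi> \<omega>) (G w) \<partial>M)"
        using C_pos by (simp add: ennreal_mult[symmetric])
    qed
    also have "\<dots> = (\<integral>\<^sup>+\<omega>. g2 (\<Psi>s (Suc n) \<omega>) (P x n \<omega>) \<partial>N)" by (rule KLi[OF g2m, symmetric])
    finally show "ennreal C * (\<integral>\<^sup>+\<omega>. ennreal ((norm (P x n \<omega>))\<^sup>2) \<partial>N)
      \<le> (\<integral>\<^sup>+\<omega>. ennreal ((norm (\<Psi>s (Suc n) \<omega> (P x n \<omega>)))\<^sup>2) \<partial>N)" unfolding g2_def .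
  qed
  define a where "a x n = (\<integral>\<^sup>+\<omega>. ennreal ((norm (P x n \<omega>))\<^sup>2) \<partial>N)" for x n
  define b where "b x n = (\<integral>\<^sup>+\<omega>. ennreal ((norm (\<Psi>s (Suc n) \<omega> (P x n \<omega>)))\<^sup>2) \<partial>N)" for x n
  have ab: "a x (Suc n) + b x n \<le> a x n" for x n unfolding a_def b_def by (rule a_ineq)
  have Cab: "ennreal C * a x n \<le> b x n" for x n unfolding a_def b_def by (rule b_ineq)
  have a0: "a x 0 = ennreal ((norm x)\<^sup>2)" for x by (simp add: a_def P0 N.emeasure_space_1)
  have a_le: "a x n \<le> ennreal ((norm x)\<^sup>2)" for x n
  proof (induction n)
    case 0 show ?case by (simp add: a0)
  next
    case (Suc n)
    have "a x (Suc n) \<le> a x (Suc n) + b x n" by simp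
    also have "\<dots> \<le> a x n" by (rule ab)
    finally show ?case using Suc by simp
  qed
  have b_le: "b x n \<le> ennreal ((norm x)\<^sup>2)" for x n
  proof -
    have "b x n \<le> a x (Suc n) + b x n" by simp
    also have "\<dots> \<le> a x n" by (rule ab)
    finally show ?thesis using a_le[of x n] by simp
  qed
  define A where "A x n = (\<integral>\<omega>. (norm (P x n \<omega>))\<^sup>2 \<partial>N)" for x n
  define B where "B x n = (\<integral>\<omega>. (norm (\<Psi>s (Suc n) \<omega> (P x n \<omega>)))\<^sup>2 \<partial>N)" for x n
  have Aint: "integrable N (\<lambda>\<omega>. (norm (P x n \<omega>))\<^sup>2)" for x n
  proof (rule integrableI_bounded)
    show "(\<lambda>\<omega>. (norm (P x n \<omega>))\<^sup>2) \<in> borel_measurable N" by (rule nsq_meas_real[OF Pm])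
    have "(\<integral>\<^sup>+\<omega>. ennreal (norm ((norm (P x n \<omega>))\<^sup>2)) \<partial>N) = a x n" by (simp add: a_def)
    also have "\<dots> < \<infinity>" using a_le[of x n] by (simp add: le_less_trans)
    finally show "(\<integral>\<^sup>+\<omega>. ennreal (norm ((norm (P x n \<omega>))\<^sup>2)) \<partial>N) < \<infinity>" .
  qed
  have Bint: "integrable N (\<lambda>\<omega>. (norm (\<Psi>s (Suc n) \<omega> (P x n \<omega>)))\<^sup>2)" for x n
  proof (rule integrableI_bounded)
    show "(\<lambda>\<omega>. (norm (\<Psi>s (Suc n) \<omega> (P x n \<omega>)))\<^sup>2) \<in> borel_measurable N" by (rule nsq_meas_real[OF TPm])
    have "(\<integral>\<^sup>+\<omega>. ennreal (norm ((norm (\<Psi>s (Suc n) \<omega> (P x n \<omega>)))\<^sup>2)) \<partial>N) = b x n" by (simp add: b_def)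
    also have "\<dots> < \<infinity>" using b_le[of x n] by (simp add: le_less_trans)
    finally show "(\<integral>\<^sup>+\<omega>. ennreal (norm ((norm (\<Psi>s (Suc n) \<omega> (P x n \<omega>)))\<^sup>2)) \<partial>N) < \<infinity>" .
  qed
  have aA: "a x n = ennreal (A x n)" for x n
    unfolding a_def A_def by (rule nn_integral_eq_integral[OF Aint]) simp
  have bB: "b x n = ennreal (B x n)" for x n
    unfolding b_def B_def by (rule nn_integral_eq_integral[OF Bint]) simp
  have A_nn: "0 \<le> A x n" for x n unfolding A_def by (intro integral_nonneg_AE) simp
  have B_nn: "0 \<le> B x n" for x n unfolding B_def by (intro integral_nonneg_AE) simp
  have AB: "A x (Suc n) + B x n \<le> A x n" for x n
    using ab[of x n] A_nn[of x n] A_nn[of x "Suc n"] B_nn[of x n]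
    by (simp add: aA bB ennreal_plus[symmetric] del: ennreal_plus)
  have CB: "C * A x n \<le> B x n" for x n
    using Cab[of x n] A_nn[of x n] B_nn[of x n] C_pos
    by (simp add: aA bB ennreal_mult[symmetric])
  have A0: "A x 0 = (norm x)\<^sup>2" for x
    using aA[of x 0] a0[of x] A_nn[of x 0] by simp
  have Ageo: "A x n \<le> (1 - C) ^ n * (norm x)\<^sup>2" for x n
  proof (induction n)
    case 0 show ?case by (simp add: A0)
  next
    case (Suc n)
    have "A x (Suc n) \<le> (1 - C) * A x n" using AB[of x n] CB[of x n] by (simp add: algebra_simps)
    also have "\<dots> \<le> (1 - C) * ((1 - C) ^ n * (norm x)\<^sup>2)"
      using Suc C_lt1 by (intro mult_left_mono) auto
    finally show ?case by simp
  qed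
  have Ato0: "(\<lambda>n. A x n) \<longlonglongrightarrow> 0" for x
  proof (rule tendsto_sandwich[of "\<lambda>_. 0" _ _ "\<lambda>n. (1 - C) ^ n * (norm x)\<^sup>2"])
    show "\<forall>\<^sub>F n in sequentially. 0 \<le> A x n" using A_nn by simp
    show "\<forall>\<^sub>F n in sequentially. A x n \<le> (1 - C) ^ n * (norm x)\<^sup>2" using Ageo by simp
    show "(\<lambda>n. (1 - C) ^ n * (norm x)\<^sup>2) \<longlonglongrightarrow> 0"
      using C_pos C_lt1 by (intro tendsto_mult_left_zero LIMSEQ_power_zero) auto
  qed simp
  have claim1: "\<forall>x. (\<lambda>n. \<integral>\<omega>. (norm (x - (\<Sum>k\<in>{1..n}. Top \<Psi>s k \<omega> x)))\<^sup>2 \<partial>N) \<longlonglongrightarrow> 0"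
  proof
    fix x
    have "(\<lambda>n. \<integral>\<omega>. (norm (x - (\<Sum>k\<in>{1..n}. Top \<Psi>s k \<omega> x)))\<^sup>2 \<partial>N) = (\<lambda>n. A x n)"
      by (simp only: tele A_def)
    then show "(\<lambda>n. \<integral>\<omega>. (norm (x - (\<Sum>k\<in>{1..n}. Top \<Psi>s k \<omega> x)))\<^sup>2 \<partial>N) \<longlonglongrightarrow> 0"
      using Ato0 by simp
  qed
  have claim2: "\<forall>x. AE \<omega> in N. (\<lambda>n. \<Sum>k\<in>{1..n}. Top \<Psi>s k \<omega> x) \<longlonglongrightarrow> x"
  proof
    fix x
    have sA: "summable (\<lambda>n. A x n)"
    proof (rule summable_comparison_test')
      show "summable (\<lambda>n. (1 - C) ^ n * (norm x)\<^sup>2)"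
        using C_pos C_lt1 by (intro summable_mult2 summable_geometric) auto
      show "norm (A x n) \<le> (1 - C) ^ n * (norm x)\<^sup>2" for n using Ageo A_nn by simp
    qed
    have "(\<integral>\<^sup>+\<omega>. (\<Sum>n. ennreal ((norm (P x n \<omega>))\<^sup>2)) \<partial>N) = (\<Sum>n. a x n)"
      unfolding a_def by (rule nn_integral_suminf) (rule nsq_meas[OF Pm])
    also have "\<dots> = (\<Sum>n. ennreal (A x n))" by (simp add: aA)
    also have "\<dots> \<noteq> \<top>" using ennreal_suminf_neq_top[OF sA A_nn] by simp
    finally have "(\<integral>\<^sup>+\<omega>. (\<Sum>n. ennreal ((norm (P x n \<omega>))\<^sup>2)) \<partial>N) \<noteq> \<top>" .
    then have "AE \<omega> in N. (\<Sum>n. ennreal ((norm (P x n \<omega>))\<^sup>2)) \<noteq> \<top>"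
      by (rule nn_integral_PInf_AE[OF borel_measurable_suminf_order[of "\<lambda>n \<omega>. ennreal ((norm (P x n \<omega>))\<^sup>2)", OF nsq_meas[OF Pm]], unfolded infinity_ennreal_def])
    then show "AE \<omega> in N. (\<lambda>n. \<Sum>k\<in>{1..n}. Top \<Psi>s k \<omega> x) \<longlonglongrightarrow> x"
    proof (rule eventually_mono)
      fix \<omega> assume fin: "(\<Sum>n. ennreal ((norm (P x n \<omega>))\<^sup>2)) \<noteq> \<top>"
      have "summable (\<lambda>n. (norm (P x n \<omega>))\<^sup>2)"
        by (rule summable_suminf_not_top) (use fin in auto)
      then have "(\<lambda>n. (norm (P x n \<omega>))\<^sup>2) \<longlonglongrightarrow> 0" by (rule summable_LIMSEQ_zero)
      then have "(\<lambda>n. sqrt ((norm (P x n \<omega>))\<^sup>2)) \<longlonglongrightarrow> sqrt 0" by (rule tendsto_real_sqrt)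
      then have "(\<lambda>n. norm (P x n \<omega>)) \<longlonglongrightarrow> 0" by simp
      then have "(\<lambda>n. P x n \<omega>) \<longlonglongrightarrow> 0" by (simp only: tendsto_norm_zero_iff)
      then have "(\<lambda>n. x - P x n \<omega>) \<longlonglongrightarrow> x - 0" by (intro tendsto_diff tendsto_const)
      moreover have "(\<Sum>k\<in>{1..n}. Top \<Psi>s k \<omega> x) = x - P x n \<omega>" for n
      proof -
        have "x - (\<Sum>k\<in>{1..n}. Top \<Psi>s k \<omega> x) = P x n \<omega>" by (rule tele)
        then show ?thesis by (simp add: algebra_simps)
      qed
      ultimately show "(\<lambda>n. \<Sum>k\<in>{1..n}. Top \<Psi>s k \<omega> x) \<longlonglongrightarrow> x" by simp
    qed
  qed
  have claim3: "\<forall>x. convergent (\<lambda>n. \<integral>\<omega>. (\<Sum>k\<in>{1..n}. (norm (Top \<Psi>s k \<omega> x))\<^sup>2) \<partial>N)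
              \<and> C * (norm x)\<^sup>2 \<le> lim (\<lambda>n. \<integral>\<omega>. (\<Sum>k\<in>{1..n}. (norm (Top \<Psi>s k \<omega> x))\<^sup>2) \<partial>N)
              \<and> lim (\<lambda>n. \<integral>\<omega>. (\<Sum>k\<in>{1..n}. (norm (Top \<Psi>s k \<omega> x))\<^sup>2) \<partial>N) \<le> (norm x)\<^sup>2"
  proof
    fix x
    define S where "S n = (\<Sum>j<n. B x j)" for n
    have Seq: "(\<lambda>n. \<integral>\<omega>. (\<Sum>k\<in>{1..n}. (norm (Top \<Psi>s k \<omega> x))\<^sup>2) \<partial>N) = S"
    proof
      fix n
      have "(\<integral>\<omega>. (\<Sum>k\<in>{1..n}. (norm (Top \<Psi>s k \<omega> x))\<^sup>2) \<partial>N)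
          = (\<integral>\<omega>. (\<Sum>j<n. (norm (\<Psi>s (Suc j) \<omega> (P x j \<omega>)))\<^sup>2) \<partial>N)"
        by (simp only: sum_shift1 Top_eq)
      also have "\<dots> = (\<Sum>j<n. B x j)"
        unfolding B_def by (rule Bochner_Integration.integral_sum) (rule Bint)
      finally show "(\<integral>\<omega>. (\<Sum>k\<in>{1..n}. (norm (Top \<Psi>s k \<omega> x))\<^sup>2) \<partial>N) = S n" by (simp add: S_def)
    qed
    have S_le: "S n \<le> A x 0 - A x n" for n
    proof (induction n)
      case 0 show ?case by (simp add: S_def)
    next
      case (Suc n)
      have "S (Suc n) = S n + B x n" by (simp add: S_def)
      then show ?case using Suc AB[of x n] by simp
    qed
    have S_bd: "S n \<le> (norm x)\<^sup>2" for n using S_le[of n] A_nn[of x n] A0[of x] by simp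
    have S_inc: "incseq S" unfolding incseq_Suc_iff S_def using B_nn by simp
    have lim: "S \<longlonglongrightarrow> (SUP n. S n)"
      by (rule LIMSEQ_incseq_SUP[OF _ S_inc]) (rule bdd_aboveI2[OF S_bd])
    have limS: "lim S = (SUP n. S n)" using lim by (rule limI)
    have "C * (norm x)\<^sup>2 \<le> S 1" using CB[of x 0] A0[of x] by (simp add: S_def)
    also have "S 1 \<le> lim S" unfolding limS by (rule incseq_le[OF S_inc lim])
    finally have low: "C * (norm x)\<^sup>2 \<le> lim S" .
    have up: "lim S \<le> (norm x)\<^sup>2" unfolding limS
      by (rule LIMSEQ_le_const2[OF lim]) (use S_bd in auto)
    show "convergent (\<lambda>n. \<integral>\<omega>. (\<Sum>k\<in>{1..n}. (norm (Top \<Psi>s k \<omega> x))\<^sup>2) \<partial>N)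
              \<and> C * (norm x)\<^sup>2 \<le> lim (\<lambda>n. \<integral>\<omega>. (\<Sum>k\<in>{1..n}. (norm (Top \<Psi>s k \<omega> x))\<^sup>2) \<partial>N)
              \<and> lim (\<lambda>n. \<integral>\<omega>. (\<Sum>k\<in>{1..n}. (norm (Top \<Psi>s k \<omega> x))\<^sup>2) \<partial>N) \<le> (norm x)\<^sup>2"
      unfolding Seq using lim low up by (auto simp: convergent_def)
  qed
  show ?thesis using claim1 claim2 claim3 by blast
qed

end
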